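(* Let $G$ and $H$ be word-representable graphs with representation numbers $k_1$ and $k_2$, respectively. Then $G\,\square\,H$ is $(k_1 + k_2 + \min\{|G|,|H|\})$-representable.
   Context: All graphs are simple and undirected; $|G|$ denotes the number of vertices of $G$. Letters $x,y$ alternate in a word $w$ if deleting all other letters from $w$ yields $xyxy\ldots$ or $yxyx\ldots$ (of either parity). A word $w$ over $V(G)$ represents $G$ if every vertex occurs in $w$ and for all distinct $x,y$, $xy\in E(G)$ iff $x,y$ alternate in $w$. A word is $k$-uniform if each of its letters occurs exactly $k$ times; $G$ is $k$-representable if it is represented by some $k$-uniform word; the representation number of a word-representable graph $G$ is the least $k$ such that $G$ is $k$-representable. The Cartesian product $G\,\square\,H$ has vertex set $V(G)\times V(H)$, with $(u,v)$ adjacent to $(u',v')$ iff either $u=u'$ and $vv'\in E(H)$, or $v=v'$ and $uu'\in E(G)$. *)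

theory Defs
  imports Main
begin

definition simple_graph :: "'a set \<Rightarrow> ('a \<Rightarrow> 'a \<Rightarrow> bool) \<Rightarrow> bool" where
  "simple_graph V E \<longleftrightarrow> finite V \<and> (\<forall>x y. E x y \<longrightarrow> x \<in> V \<and> y \<in> V)
     \<and> (\<forall>x y. E x y \<longrightarrow> E y x) \<and> (\<forall>x. \<not> E x x)"

fun no_adj_repeat :: "'a list \<Rightarrow> bool" where
  "no_adj_repeat [] = True"
| "no_adj_repeat [a] = True"
| "no_adj_repeat (a # b # xs) = (a \<noteq> b \<and> no_adj_repeat (b # xs))"

definition alternate :: "'a list \<Rightarrow> 'a \<Rightarrow> 'a \<Rightarrow> bool" where
  "alternate w x y \<longleftrightarrow> no_adj_repeat (filter (\<lambda>z. z = x \<or> z = y) w)"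

definition represents :: "'a list \<Rightarrow> 'a set \<Rightarrow> ('a \<Rightarrow> 'a \<Rightarrow> bool) \<Rightarrow> bool" where
  "represents w V E \<longleftrightarrow> set w = V \<and>
     (\<forall>x\<in>V. \<forall>y\<in>V. x \<noteq> y \<longrightarrow> (E x y \<longleftrightarrow> alternate w x y))"

definition uniform :: "nat \<Rightarrow> 'a list \<Rightarrow> bool" where
  "uniform k w \<longleftrightarrow> (\<forall>x\<in>set w. count_list w x = k)"

definition k_representable :: "nat \<Rightarrow> 'a set \<Rightarrow> ('a \<Rightarrow> 'a \<Rightarrow> bool) \<Rightarrow> bool" where
  "k_representable k V E \<longleftrightarrow> (\<exists>w. uniform k w \<and> represents w V E)"

definition word_representable :: "'a set \<Rightarrow> ('a \<Rightarrow> 'a \<Rightarrow> bool) \<Rightarrow> bool" where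
  "word_representable V E \<longleftrightarrow> (\<exists>w. represents w V E)"

definition representation_number :: "'a set \<Rightarrow> ('a \<Rightarrow> 'a \<Rightarrow> bool) \<Rightarrow> nat" where
  "representation_number V E = (LEAST k. k_representable k V E)"

definition cart_V :: "'a set \<Rightarrow> 'b set \<Rightarrow> ('a \<times> 'b) set" where
  "cart_V VG VH = VG \<times> VH"

definition cart_E :: "('a \<Rightarrow> 'a \<Rightarrow> bool) \<Rightarrow> ('b \<Rightarrow> 'b \<Rightarrow> bool)
    \<Rightarrow> ('a \<times> 'b) \<Rightarrow> ('a \<times> 'b) \<Rightarrow> bool" where
  "cart_E EG EH = (\<lambda>(u, v) (u', v'). (u = u' \<and> EH v v') \<or> (v = v' \<and> EG u u'))"

end

theory Submission
  imports Defs
begin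

fun altw :: "'a \<Rightarrow> 'a \<Rightarrow> nat \<Rightarrow> 'a list" where
  "altw x y 0 = []"
| "altw x y (Suc n) = x # altw y x n"

lemma altw_append:
  "altw x y a @ altw (if even a then x else y) (if even a then y else x) b = altw x y (a + b)"
  by (induction a arbitrary: x y) auto

lemma nar_altw: "x \<noteq> y \<Longrightarrow> no_adj_repeat (altw x y n)"
proof (induction n arbitrary: x y)
  case 0 then show ?case by simp
next
  case (Suc n) then show ?case by (cases n) auto
qed

lemma nar_append:
  "no_adj_repeat (A @ B) \<longleftrightarrow> no_adj_repeat A \<and> no_adj_repeat B \<and> (A \<noteq> [] \<longrightarrow> B \<noteq> [] \<longrightarrow> last A \<noteq> hd B)"
proof (induction A rule: no_adj_repeat.induct)
  case 1 then show ?case by simp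
next
  case (2 a) then show ?case by (cases B) auto
next
  case (3 a b xs) then show ?case by auto
qed

lemma nar_Cons: "no_adj_repeat (a # L) \<longleftrightarrow> no_adj_repeat L \<and> (L \<noteq> [] \<longrightarrow> a \<noteq> hd L)"
  by (cases L) auto

lemma nar_map: "inj_on f (set L) \<Longrightarrow> no_adj_repeat (map f L) = no_adj_repeat L"
proof (induction L rule: no_adj_repeat.induct)
  case (3 a b xs) then show ?case by (auto simp: inj_on_def)
qed auto

lemma map_altw: "map f (altw x y n) = altw (f x) (f y) n"
  by (induction n arbitrary: x y) auto

lemma count_altw:
  assumes "x \<noteq> y"
  shows "count_list (altw x y n) x = (n + 1) div 2 \<and> count_list (altw x y n) y = n div 2"
  using assms by (induction n arbitrary: x y) auto

lemma set_altw: "set (altw x y n) \<subseteq> {x, y}"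
  by (induction n arbitrary: x y) auto

lemma alt_any:
  assumes "no_adj_repeat F" "set F \<subseteq> {x, y}"
  shows "F = altw x y (length F) \<or> F = altw y x (length F)"
  using assms
proof (induction F)
  case Nil then show ?case by simp
next
  case (Cons a F)
  then have IH: "F = altw x y (length F) \<or> F = altw y x (length F)" by (simp add: nar_Cons)
  have ha: "a = x \<or> a = y" using Cons.prems by auto
  show ?case
  proof (cases F)
    case Nil then show ?thesis using ha by auto
  next
    case (Cons b F')
    then have hb: "b \<noteq> a" using \<open>no_adj_repeat (a # F)\<close> by auto
    show ?thesis
    proof (cases "a = x")
      case True
      then have "F \<noteq> altw x y (length F)" using hb Cons by auto
      then have "F = altw y x (length F)" using IH by blast
      then show ?thesis using True by simp
    next
      case False
      then have "a = y" using ha by blast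
      then have "F \<noteq> altw y x (length F)" using hb Cons by auto
      then have "F = altw x y (length F)" using IH by blast
      then show ?thesis using \<open>a = y\<close> by simp
    qed
  qed
qed

lemma alt_struct:
  assumes "no_adj_repeat F" "set F \<subseteq> {x, y}" "x \<noteq> y" "count_list F x = count_list F y"
  shows "F = altw x y (2 * count_list F x) \<or> F = altw y x (2 * count_list F x)"
proof -
  define n where "n = length F"
  have c: "F = altw x y n \<or> F = altw y x n" using alt_any[OF assms(1,2)] unfolding n_def by blast
  then show ?thesis
  proof
    assume h: "F = altw x y n"
    have c1: "count_list F x = (n + 1) div 2" 
      using count_altw[OF assms(3), of n] unfolding h by simp
    have c2: "count_list F y = n div 2"
      using count_altw[OF assms(3), of n] unfolding h by simp
    have "n = 2 * count_list F x" using assms(4) c1 c2 by presburger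
    then show ?thesis using h by metis
  next
    assume h: "F = altw y x n"
    have ne: "y \<noteq> x" using assms(3) by simp
    have c1: "count_list F y = (n + 1) div 2" 
      using count_altw[OF ne, of n] unfolding h by simp
    have c2: "count_list F x = n div 2"
      using count_altw[OF ne, of n] unfolding h by simp
    have "n = 2 * count_list F x" using assms(4) c1 c2 by presburger
    then show ?thesis using h by metis
  qed
qed

lemma remdups_altw: "x \<noteq> y \<Longrightarrow> remdups (altw x y (2 * Suc k)) = [x, y]"
proof (induction k)
  case 0 then show ?case by (simp add: numeral_2_eq_2)
next
  case (Suc k)
  have e: "altw x y (2 * Suc (Suc k)) = x # y # altw x y (2 * Suc k)"
    by (simp add: numeral_2_eq_2)
  have "x \<in> set (altw x y (2 * Suc k))" "y \<in> set (altw x y (2 * Suc k))"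
    by (simp_all add: numeral_2_eq_2)
  then show ?case using e Suc by simp
qed

lemma filter_upt1: "filter (\<lambda>k. k = i) [l..<u] = (if l \<le> i \<and> i < u then [i] else [])"
  by (induction u) auto

lemma filter_upt2: "i < j \<Longrightarrow> filter (\<lambda>k. k = i \<or> k = j) [l..<u] =
   (if l \<le> i \<and> i < u then [i] else []) @ (if l \<le> j \<and> j < u then [j] else [])"
  by (induction u) auto

lemma filter_nth2:
  assumes "distinct xs" "i < j" "j < length xs"
  shows "filter (\<lambda>z. z = xs ! i \<or> z = xs ! j) xs = [xs ! i, xs ! j]"
proof -
  have "filter (\<lambda>z. z = xs ! i \<or> z = xs ! j) xs
     = filter (\<lambda>z. z = xs ! i \<or> z = xs ! j) (map (nth xs) [0..<length xs])"
    by (simp only: map_nth)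
  also have "\<dots> = map (nth xs) (filter (\<lambda>k. xs ! k = xs ! i \<or> xs ! k = xs ! j) [0..<length xs])"
    by (simp add: filter_map o_def)
  also have "filter (\<lambda>k. xs ! k = xs ! i \<or> xs ! k = xs ! j) [0..<length xs]
      = filter (\<lambda>k. k = i \<or> k = j) [0..<length xs]"
    using assms by (intro filter_cong) (auto simp: nth_eq_iff_index_eq)
  also have "\<dots> = [i, j]" using filter_upt2[OF assms(2)] assms by simp
  finally show ?thesis by simp
qed

lemma concat_if2:
  "concat (map (\<lambda>z. if z = u then [X] else if z = u' then [Y] else []) w)
   = map (\<lambda>z. if z = u then X else Y) (filter (\<lambda>z. z = u \<or> z = u') w)"
  by (induction w) auto

lemma concat_rep:
  "concat (map (\<lambda>z. if z = u then L else []) w) = concat (replicate (count_list w u) L)"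
  by (induction w) auto

lemma cnt_filter: "count_list xs x = length (filter (\<lambda>z. z = x) xs)"
  by (induction xs) auto

lemma nar_filter_split:
  "no_adj_repeat (A @ B @ C) \<Longrightarrow> no_adj_repeat B"
  by (simp add: nar_append)

lemma length_altw[simp]: "length (altw x y n) = n"
  by (induction n arbitrary: x y) auto

lemma concat_rep_pair: "concat (replicate k [x, y]) = altw x y (2 * k)"
  by (induction k) auto

lemma filter_single_distinct:
  "distinct P \<Longrightarrow> v \<in> set P \<Longrightarrow> filter (\<lambda>b. b = v) P = [v]"
  by (induction P) (auto simp: filter_empty_conv)

lemma count_filter_in: "Q x \<Longrightarrow> count_list (filter Q w) x = count_list w x"
  by (induction w) auto

definition blk :: "'a list \<Rightarrow> 'b list \<Rightarrow> ('a \<times> 'b) list" where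
  "blk w P = concat (map (\<lambda>z. map (Pair z) P) w)"

lemma filter_blk:
  "filter Q (blk w P) = concat (map (\<lambda>z. map (Pair z) (filter (\<lambda>v. Q (z, v)) P)) w)"
  by (simp add: blk_def filter_concat filter_map o_def)

lemma set_blk: "set (blk w P) = set w \<times> set P"
  by (auto simp: blk_def)

lemma blk_B1:
  assumes "v \<noteq> v'"
  shows "filter (\<lambda>z. z = (u, v) \<or> z = (u, v')) (blk w P)
     = concat (replicate (count_list w u) (map (Pair u) (filter (\<lambda>b. b = v \<or> b = v') P)))"
proof -
  have "filter (\<lambda>z. z = (u, v) \<or> z = (u, v')) (blk w P)
     = concat (map (\<lambda>z. if z = u then map (Pair u) (filter (\<lambda>b. b = v \<or> b = v') P) else []) w)"
    unfolding filter_blk by (intro arg_cong[where f=concat] map_cong) auto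
  then show ?thesis by (simp add: concat_rep)
qed

lemma blk_B2:
  assumes "distinct P" "v \<in> set P" "v' \<in> set P" "u \<noteq> u'"
  shows "filter (\<lambda>z. z = (u, v) \<or> z = (u', v')) (blk w P)
     = map (\<lambda>z. if z = u then (u, v) else (u', v')) (filter (\<lambda>z. z = u \<or> z = u') w)"
proof -
  have "filter (\<lambda>z. z = (u, v) \<or> z = (u', v')) (blk w P)
     = concat (map (\<lambda>z. if z = u then [(u, v)] else if z = u' then [(u', v')] else []) w)"
    unfolding filter_blk
  proof (intro arg_cong[where f=concat] map_cong refl)
    fix z
    show "map (Pair z) (filter (\<lambda>b. (z, b) = (u, v) \<or> (z, b) = (u', v')) P)
        = (if z = u then [(u, v)] else if z = u' then [(u', v')] else [])"
    proof (cases "z = u")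
      case True
      then have "filter (\<lambda>b. (z, b) = (u, v) \<or> (z, b) = (u', v')) P = filter (\<lambda>b. b = v) P"
        using assms(4) by (intro filter_cong) auto
      then show ?thesis using True filter_single_distinct[OF assms(1,2)] by simp
    next
      case False
      show ?thesis
      proof (cases "z = u'")
        case True
        then have "filter (\<lambda>b. (z, b) = (u, v) \<or> (z, b) = (u', v')) P = filter (\<lambda>b. b = v') P"
          using assms(4) by (intro filter_cong) auto
        then show ?thesis using True False filter_single_distinct[OF assms(1,3)] by simp
      next
        case False2: False
        then have "filter (\<lambda>b. (z, b) = (u, v) \<or> (z, b) = (u', v')) P = []"
          using False by (auto simp: filter_empty_conv)
        then show ?thesis using False False2 by simp
      qed
    qed
  qed
  then show ?thesis by (simp add: concat_if2)
qed

lemma blk_count: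
  assumes "distinct P" "v \<in> set P"
  shows "count_list (blk w P) (u, v) = count_list w u"
proof -
  have "filter (\<lambda>z. z = (u, v)) (blk w P) = concat (map (\<lambda>z. if z = u then [(u, v)] else []) w)"
    unfolding filter_blk
  proof (intro arg_cong[where f=concat] map_cong refl)
    fix z
    show "map (Pair z) (filter (\<lambda>b. (z, b) = (u, v)) P) = (if z = u then [(u, v)] else [])"
    proof (cases "z = u")
      case True
      then have "filter (\<lambda>b. (z, b) = (u, v)) P = filter (\<lambda>b. b = v) P" by (intro filter_cong) auto
      then show ?thesis using True filter_single_distinct[OF assms] by simp
    qed (auto simp: filter_empty_conv)
  qed
  then show ?thesis by (simp add: cnt_filter concat_rep)
qed

definition rotI :: "nat \<Rightarrow> nat \<Rightarrow> nat list" where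
  "rotI n s = [Suc s..<n] @ [0..<Suc s]"
definition rowI :: "nat \<Rightarrow> nat \<Rightarrow> (nat \<times> nat) list" where
  "rowI m s = map (Pair s) [0..<m]"
definition colI :: "nat \<Rightarrow> nat \<Rightarrow> nat \<Rightarrow> (nat \<times> nat) list" where
  "colI n m s = concat (map (\<lambda>a. map (\<lambda>i. (i, a)) (rotI n s)) [0..<m])"
definition stageI :: "nat \<Rightarrow> nat \<Rightarrow> nat \<Rightarrow> (nat \<times> nat) list" where
  "stageI n m s = rowI m s @ (if Suc s < n then colI n m s else [])"
definition EI :: "nat \<Rightarrow> nat \<Rightarrow> (nat \<times> nat) list" where
  "EI n m = concat (map (stageI n m) [0..<n])"

lemma set_EI: "set (EI n m) \<subseteq> {..<n} \<times> {..<m}"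
  by (auto simp: EI_def stageI_def rowI_def colI_def rotI_def)

lemma filter_rowI: "filter Q (rowI m s) = map (Pair s) (filter (\<lambda>b. Q (s, b)) [0..<m])"
  by (simp add: rowI_def filter_map o_def)

lemma filter_colI: "filter Q (colI n m s)
   = concat (map (\<lambda>a. map (\<lambda>i. (i, a)) (filter (\<lambda>i. Q (i, a)) (rotI n s))) [0..<m])"
  by (simp add: colI_def filter_concat filter_map o_def)

lemma filter_EI: "filter Q (EI n m) = concat (map (\<lambda>s. filter Q (stageI n m s)) [0..<n])"
  by (simp add: EI_def filter_concat o_def)

lemma count_upt: "count_list [0..<m] a = (if a < m then 1 else 0)"
  by (induction m) auto

lemma concat_col: "a < m \<Longrightarrow> concat (map (\<lambda>b. if b = a then g else []) [0..<m]) = g"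
  by (simp add: concat_rep count_upt)

lemma filter_rot1: "i < n \<Longrightarrow> filter (\<lambda>j. j = i) (rotI n s) = [i]"
  by (auto simp: rotI_def filter_upt1)

lemma concat_altw_gen:
  assumes "c 0 = 0" "\<And>s. s < t \<Longrightarrow> c s \<le> c (Suc s)"
    "\<And>s. s < t \<Longrightarrow> f s = altw (if even (c s) then p else q) (if even (c s) then q else p) (c (Suc s) - c s)"
  shows "concat (map f [0..<t]) = altw p q (c t)"
  using assms(2,3)
proof (induction t)
  case 0 then show ?case using assms(1) by simp
next
  case (Suc t)
  have "concat (map f [0..<Suc t]) = altw p q (c t) @ f t" using Suc by simp
  also have "\<dots> = altw p q (c t + (c (Suc t) - c t))" using Suc.prems[of t] by (simp add: altw_append)
  also have "c t + (c (Suc t) - c t) = c (Suc t)" using Suc.prems(1)[of t] by simp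
  finally show ?case .
qed

lemma EI_row:
  assumes "i < n" "a < a'" "a' < m"
  shows "filter (\<lambda>z. z = (i, a) \<or> z = (i, a')) (EI n m) = altw (i, a) (i, a') (2 * n)"
proof -
  let ?p = "(i, a)" and ?q = "(i, a')"
  let ?Q = "\<lambda>z. z = ?p \<or> z = ?q"
  have r: "filter ?Q (rowI m s) = (if s = i then [?p, ?q] else [])" for s
  proof (cases "s = i")
    case True
    then have "filter (\<lambda>b. ?Q (s, b)) [0..<m] = filter (\<lambda>b. b = a \<or> b = a') [0..<m]"
      by (intro filter_cong) auto
    then show ?thesis using True filter_upt2[OF assms(2)] assms by (simp add: filter_rowI)
  next
    case False
    then have "filter (\<lambda>b. ?Q (s, b)) [0..<m] = []" by (auto simp: filter_empty_conv)
    then show ?thesis using False by (simp add: filter_rowI)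
  qed
  have cl: "filter ?Q (colI n m s) = [?p, ?q]" for s
  proof -
    have "filter ?Q (colI n m s) = concat (map (\<lambda>b. if b = a then [?p] else if b = a' then [?q] else []) [0..<m])"
      unfolding filter_colI
    proof (intro arg_cong[where f=concat] map_cong refl)
      fix b
      show "map (\<lambda>j. (j, b)) (filter (\<lambda>j. ?Q (j, b)) (rotI n s)) = (if b = a then [?p] else if b = a' then [?q] else [])"
      proof (cases "b = a \<or> b = a'")
        case True
        then have "filter (\<lambda>j. ?Q (j, b)) (rotI n s) = filter (\<lambda>j. j = i) (rotI n s)"
          by (intro filter_cong) auto
        then show ?thesis using True filter_rot1[OF assms(1)] assms(2) by auto
      next
        case False
        then have "filter (\<lambda>j. ?Q (j, b)) (rotI n s) = []" by (auto simp: filter_empty_conv)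
        then show ?thesis using False by simp
      qed
    qed
    also have "\<dots> = [?p, ?q]" using filter_upt2[OF assms(2)] assms by (simp add: concat_if2)
    finally show ?thesis .
  qed
  define c where "c s = 2 * ((if i < s then 1 else 0) + min s (n - 1))" for s
  have "filter ?Q (EI n m) = concat (map (\<lambda>s. (if s = i then [?p, ?q] else []) @ (if Suc s < n then [?p, ?q] else [])) [0..<n])"
    unfolding filter_EI stageI_def by (intro arg_cong[where f=concat] map_cong refl) (simp add: r cl)
  also have "\<dots> = altw ?p ?q (c n)"
  proof (rule concat_altw_gen)
    show "c 0 = 0" by (simp add: c_def)
    fix s assume s: "s < n"
    show "c s \<le> c (Suc s)" by (auto simp: c_def min_def)
    show "(if s = i then [?p, ?q] else []) @ (if Suc s < n then [?p, ?q] else [])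
       = altw (if even (c s) then ?p else ?q) (if even (c s) then ?q else ?p) (c (Suc s) - c s)"
    proof -
      have ev: "even (c s)" by (simp add: c_def)
      have d: "c (Suc s) - c s = 2 * ((if s = i then 1 else 0) + (if Suc s < n then 1 else 0))"
        using s by (auto simp: c_def min_def)
      show ?thesis unfolding d using ev
        by (cases "s = i"; cases "Suc s < n") (simp_all add: numeral_eq_Suc)
    qed
  qed
  also have "c n = 2 * n" using assms(1) by (simp add: c_def)
  finally show ?thesis .
qed


lemma altw_1: "altw x y 1 = [x]" by simp
lemma altw_2: "altw x y 2 = [x, y]" by (simp add: numeral_eq_Suc)
lemma altw_3: "altw x y 3 = [x, y, x]" by (simp add: numeral_eq_Suc)
lemma altw_same: "altw x x k = replicate k x" by (induction k) auto

lemma EI_col: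
  assumes "i < i'" "i' < n" "a < m"
  shows "filter (\<lambda>z. z = (i, a) \<or> z = (i', a)) (EI n m) = altw (i, a) (i', a) (2 * n)"
proof -
  let ?p = "(i, a)" and ?q = "(i', a)"
  let ?Q = "\<lambda>z. z = ?p \<or> z = ?q"
  have r: "filter ?Q (rowI m s) = (if s = i then [?p] else if s = i' then [?q] else [])" for s
  proof (cases "s = i \<or> s = i'")
    case True
    then have "filter (\<lambda>b. ?Q (s, b)) [0..<m] = filter (\<lambda>b. b = a) [0..<m]"
      by (intro filter_cong) auto
    then show ?thesis using True assms by (auto simp add: filter_rowI filter_upt1)
  next
    case False
    then have "filter (\<lambda>b. ?Q (s, b)) [0..<m] = []" by (auto simp: filter_empty_conv)
    then show ?thesis using False by (simp add: filter_rowI)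
  qed
  have cl: "filter ?Q (colI n m s) = map (\<lambda>j. (j, a)) ((if Suc s \<le> i then [i] else []) @ (if Suc s \<le> i' then [i'] else [])
        @ (if i < Suc s then [i] else []) @ (if i' < Suc s then [i'] else []))" for s
  proof -
    have "filter ?Q (colI n m s) = concat (map (\<lambda>b. if b = a then map (\<lambda>j. (j, a)) (filter (\<lambda>j. j = i \<or> j = i') (rotI n s)) else []) [0..<m])"
      unfolding filter_colI
    proof (intro arg_cong[where f=concat] map_cong refl)
      fix b
      show "map (\<lambda>j. (j, b)) (filter (\<lambda>j. ?Q (j, b)) (rotI n s)) = (if b = a then map (\<lambda>j. (j, a)) (filter (\<lambda>j. j = i \<or> j = i') (rotI n s)) else [])"
      proof (cases "b = a")
        case True
        then have "filter (\<lambda>j. ?Q (j, b)) (rotI n s) = filter (\<lambda>j. j = i \<or> j = i') (rotI n s)"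
          by (intro filter_cong) auto
        then show ?thesis using True by simp
      next
        case False
        then have "filter (\<lambda>j. ?Q (j, b)) (rotI n s) = []" by (auto simp: filter_empty_conv)
        then show ?thesis using False by simp
      qed
    qed
    also have "\<dots> = map (\<lambda>j. (j, a)) (filter (\<lambda>j. j = i \<or> j = i') (rotI n s))"
      using assms(3) by (rule concat_col)
    also have "filter (\<lambda>j. j = i \<or> j = i') (rotI n s) = (if Suc s \<le> i then [i] else []) @ (if Suc s \<le> i' then [i'] else [])
        @ (if i < Suc s then [i] else []) @ (if i' < Suc s then [i'] else [])"
      using assms by (simp add: rotI_def filter_upt2)
    finally show ?thesis .
  qed
  define c where "c s = (if i < s then 1 else 0) + (if i' < s then 1 else 0) + 2 * min s (n - 1)" for s
  define f where "f s = (if s = i then [?p] else if s = i' then [?q] else []) @ (if Suc s < n then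
       map (\<lambda>j. (j, a)) ((if Suc s \<le> i then [i] else []) @ (if Suc s \<le> i' then [i'] else [])
        @ (if i < Suc s then [i] else []) @ (if i' < Suc s then [i'] else [])) else [])" for s
  have "filter ?Q (EI n m) = concat (map f [0..<n])"
    unfolding filter_EI stageI_def f_def by (intro arg_cong[where f=concat] map_cong refl) (simp add: r cl)
  also have "\<dots> = altw ?p ?q (c n)"
  proof (rule concat_altw_gen)
    show "c 0 = 0" by (simp add: c_def)
    fix s assume s: "s < n"
    show "c s \<le> c (Suc s)" by (auto simp: c_def min_def)
    consider (a) "s < i" | (b) "s = i" | (c) "i < s" "s < i'" | (d) "s = i'" | (e) "i' < s" by linarith
    then show "f s = altw (if even (c s) then ?p else ?q) (if even (c s) then ?q else ?p) (c (Suc s) - c s)"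
    proof cases
      case a
      then have "c s = 2 * s" "c (Suc s) = 2 * s + 2" "Suc s < n" using s assms by (auto simp: c_def min_def)
      then show ?thesis using a assms by (simp add: f_def altw_2)
    next
      case b
      then have "c s = 2 * s" "c (Suc s) = 2 * s + 3" "Suc s < n" using s assms by (auto simp: c_def min_def)
      then show ?thesis using b assms by (simp add: f_def altw_3)
    next
      case c
      then have "c s = 2 * s + 1" "c (Suc s) = 2 * s + 3" "Suc s < n" using s assms by (auto simp: c_def min_def)
      then show ?thesis using c assms by (simp add: f_def altw_2)
    next
      case d
      show ?thesis
      proof (cases "Suc s < n")
        case True
        then have "c s = 2 * s + 1" "c (Suc s) = 2 * s + 4" using d s assms by (auto simp: c_def min_def)
        then show ?thesis using d True assms by (simp add: f_def altw_3)
      next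
        case False
        then have "c s = 2 * s + 1" "c (Suc s) = 2 * s + 2" using d s assms by (auto simp: c_def min_def)
        then show ?thesis using d False assms by (simp add: f_def)
      qed
    next
      case e
      show ?thesis
      proof (cases "Suc s < n")
        case True
        then have "c s = 2 * s + 2" "c (Suc s) = 2 * s + 4" using e s assms by (auto simp: c_def min_def)
        then show ?thesis using e True assms by (simp add: f_def altw_2)
      next
        case False
        then have "c s = 2 * s + 2" "c (Suc s) = 2 * s + 2" using e s assms by (auto simp: c_def min_def)
        then show ?thesis using e False assms by (simp add: f_def)
      qed
    qed
  qed
  also have "c n = 2 * n" using assms by (simp add: c_def)
  finally show ?thesis .
qed

lemma EI_count:
  assumes "i < n" "a < m"
  shows "count_list (EI n m) (i, a) = n"
proof -
  let ?p = "(i, a)"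
  let ?Q = "\<lambda>z. z = ?p"
  have r: "filter ?Q (rowI m s) = (if s = i then [?p] else [])" for s
  proof (cases "s = i")
    case True
    then have "filter (\<lambda>b. ?Q (s, b)) [0..<m] = filter (\<lambda>b. b = a) [0..<m]"
      by (intro filter_cong) auto
    then show ?thesis using True assms by (auto simp add: filter_rowI filter_upt1)
  next
    case False
    then have "filter (\<lambda>b. ?Q (s, b)) [0..<m] = []" by (auto simp: filter_empty_conv)
    then show ?thesis using False by (simp add: filter_rowI)
  qed
  have cl: "filter ?Q (colI n m s) = [?p]" for s
  proof -
    have "filter ?Q (colI n m s) = concat (map (\<lambda>b. if b = a then [?p] else []) [0..<m])"
      unfolding filter_colI
    proof (intro arg_cong[where f=concat] map_cong refl)
      fix b
      show "map (\<lambda>j. (j, b)) (filter (\<lambda>j. ?Q (j, b)) (rotI n s)) = (if b = a then [?p] else [])"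
      proof (cases "b = a")
        case True
        then have "filter (\<lambda>j. ?Q (j, b)) (rotI n s) = filter (\<lambda>j. j = i) (rotI n s)"
          by (intro filter_cong) auto
        then show ?thesis using True filter_rot1[OF assms(1)] by simp
      next
        case False
        then have "filter (\<lambda>j. ?Q (j, b)) (rotI n s) = []" by (auto simp: filter_empty_conv)
        then show ?thesis using False by simp
      qed
    qed
    also have "\<dots> = [?p]" using assms(2) by (rule concat_col)
    finally show ?thesis .
  qed
  define c where "c s = (if i < s then 1 else 0) + min s (n - 1)" for s
  have "filter ?Q (EI n m) = concat (map (\<lambda>s. (if s = i then [?p] else []) @ (if Suc s < n then [?p] else [])) [0..<n])"
    unfolding filter_EI stageI_def by (intro arg_cong[where f=concat] map_cong refl) (simp add: r cl)
  also have "\<dots> = altw ?p ?p (c n)"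
  proof (rule concat_altw_gen)
    show "c 0 = 0" by (simp add: c_def)
    fix s assume s: "s < n"
    show "c s \<le> c (Suc s)" by (auto simp: c_def min_def)
    have d: "c (Suc s) - c s = (if s = i then 1 else 0) + (if Suc s < n then 1 else 0)"
      using s by (auto simp: c_def min_def)
    show "(if s = i then [?p] else []) @ (if Suc s < n then [?p] else [])
       = altw (if even (c s) then ?p else ?p) (if even (c s) then ?p else ?p) (c (Suc s) - c s)"
      unfolding d altw_same by (cases "s = i"; cases "Suc s < n") (simp_all add: numeral_eq_Suc)
  qed
  also have "c n = n" using assms by (simp add: c_def)
  finally have "filter ?Q (EI n m) = altw ?p ?p n" .
  then show ?thesis by (simp add: cnt_filter)
qed

lemma EI_break:
  assumes "i < i'" "i' < n" "a < a'" "a' < m"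
  shows "\<not> no_adj_repeat (filter (\<lambda>z. z = (i, a) \<or> z = (i', a')) (EI n m))"
proof -
  let ?p = "(i, a)" and ?q = "(i', a')"
  let ?Q = "\<lambda>z. z = ?p \<or> z = ?q"
  have r: "filter ?Q (rowI m i) = [?p]"
  proof -
    have "filter (\<lambda>b. ?Q (i, b)) [0..<m] = filter (\<lambda>b. b = a) [0..<m]"
      using assms by (intro filter_cong) auto
    then show ?thesis using assms by (auto simp add: filter_rowI filter_upt1)
  qed
  have cl: "filter ?Q (colI n m i) = [?p, ?q]"
  proof -
    have "filter ?Q (colI n m i) = concat (map (\<lambda>b. if b = a then [?p] else if b = a' then [?q] else []) [0..<m])"
      unfolding filter_colI
    proof (intro arg_cong[where f=concat] map_cong refl)
      fix b
      show "map (\<lambda>j. (j, b)) (filter (\<lambda>j. ?Q (j, b)) (rotI n i)) = (if b = a then [?p] else if b = a' then [?q] else [])"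
      proof (cases "b = a")
        case True
        then have "filter (\<lambda>j. ?Q (j, b)) (rotI n i) = filter (\<lambda>j. j = i) (rotI n i)"
          using assms by (intro filter_cong) auto
        then show ?thesis using True filter_rot1[of i n i] assms by simp
      next
        case False
        show ?thesis
        proof (cases "b = a'")
          case True
          then have "filter (\<lambda>j. ?Q (j, b)) (rotI n i) = filter (\<lambda>j. j = i') (rotI n i)"
            using assms by (intro filter_cong) auto
          also have "\<dots> = [i']" using assms by (simp add: rotI_def filter_upt1)
          finally show ?thesis using True False by simp
        next
          case False2: False
          then have "filter (\<lambda>j. ?Q (j, b)) (rotI n i) = []" using False by (auto simp: filter_empty_conv)
          then show ?thesis using False False2 by simp
        qed
      qed
    qed
    also have "\<dots> = [?p, ?q]" using filter_upt2[OF assms(3)] assms by (simp add: concat_if2)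
    finally show ?thesis .
  qed
  have st: "filter ?Q (stageI n m i) = [?p, ?p, ?q]"
    using r cl assms by (simp add: stageI_def)
  have "[0..<n] = [0..<i] @ i # [Suc i..<n]"
    using assms by (metis le_add1 le_add_same_cancel1 less_trans upt_add_eq_append upt_conv_Cons zero_le add_diff_inverse_nat less_imp_le_nat not_less)
  then have "filter ?Q (EI n m) = concat (map (\<lambda>s. filter ?Q (stageI n m s)) [0..<i]) @ [?p, ?p, ?q]
      @ concat (map (\<lambda>s. filter ?Q (stageI n m s)) [Suc i..<n])"
    unfolding filter_EI using st by simp
  then show ?thesis by (simp add: nar_append)
qed

lemma last_altw_even: "last (altw x y (2 * Suc k)) = y"
proof (induction k)
  case 0 then show ?case by (simp add: numeral_eq_Suc)
next
  case (Suc k)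
  have "altw x y (2 * Suc (Suc k)) = x # y # altw x y (2 * Suc k)" by (simp add: numeral_eq_Suc)
  moreover have "altw x y (2 * Suc k) \<noteq> []" by (simp add: numeral_eq_Suc)
  ultimately show ?case using Suc by simp
qed

lemma altw_even_append: "altw x y (2 * a) @ altw x y (2 * b) = altw x y (2 * a + 2 * b)"
  using altw_append[of x y "2 * a" "2 * b"] by simp

lemma altw3: "altw x y (2 * a) @ altw x y (2 * b) @ altw x y (2 * c) = altw x y (2 * a + 2 * b + 2 * c)"
proof -
  have "altw x y (2 * a) @ altw x y (2 * b) @ altw x y (2 * c) = altw x y (2 * (a + b)) @ altw x y (2 * c)"
    using altw_even_append[of x y a b] by (simp add: algebra_simps)
  also have "\<dots> = altw x y (2 * (a + b) + 2 * c)" by (rule altw_even_append)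
  finally show ?thesis by (simp add: algebra_simps)
qed

lemma hd_altw: "hd (altw x y (Suc k)) = x" by simp

lemma junction1:
  assumes "k1 \<ge> 1" "k2 \<ge> 1" "n \<ge> 1"
  shows "\<not> no_adj_repeat (altw x y (2 * k1) @ altw x y (2 * n) @ altw y x (2 * k2))"
proof -
  have e: "altw x y (2 * k1) @ altw x y (2 * n) = altw x y (2 * (k1 + n))"
    using altw_append[of x y "2 * k1" "2 * n"] by (simp add: algebra_simps)
  obtain j where j: "k1 + n = Suc j" using assms by (cases "k1 + n") auto
  obtain l where l: "2 * k2 = Suc l" using assms by (cases "2 * k2") auto
  have "last (altw x y (2 * (k1 + n))) = y" unfolding j by (rule last_altw_even)
  moreover have "hd (altw y x (2 * k2)) = y" unfolding l by simp
  moreover have "altw x y (2 * (k1 + n)) \<noteq> []" "altw y x (2 * k2) \<noteq> []" using j l by auto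
  ultimately show ?thesis using e by (metis append_assoc nar_append)
qed

lemma junction2:
  assumes "k1 \<ge> 1" "k2 \<ge> 1" "n \<ge> 1"
  shows "\<not> no_adj_repeat (altw x y (2 * k1) @ altw y x (2 * n) @ altw y x (2 * k2))"
proof -
  obtain j where j: "k1 = Suc j" using assms by (cases k1) auto
  obtain l where l: "2 * n = Suc l" using assms by (cases "2 * n") auto
  have "last (altw x y (2 * k1)) = y" unfolding j by (rule last_altw_even)
  moreover have "hd (altw y x (2 * n) @ altw y x (2 * k2)) = y" unfolding l by simp
  moreover have "altw x y (2 * k1) \<noteq> []" "altw y x (2 * n) @ altw y x (2 * k2) \<noteq> []" using j l by auto
  ultimately show ?thesis by (metis nar_append)
qed

lemma count_map_inj:
  "inj_on f (insert x (set xs)) \<Longrightarrow> count_list (map f xs) (f x) = count_list xs x"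
  by (induction xs) (auto simp: inj_on_def)

lemma filter_map_inj:
  assumes "inj_on f (insert p (insert q (set L)))"
  shows "filter (\<lambda>z. z = f p \<or> z = f q) (map f L) = map f (filter (\<lambda>z. z = p \<or> z = q) L)"
proof -
  have "filter (\<lambda>z. z = f p \<or> z = f q) (map f L) = map f (filter (\<lambda>z. f z = f p \<or> f z = f q) L)"
    by (simp add: filter_map o_def)
  also have "filter (\<lambda>z. f z = f p \<or> f z = f q) L = filter (\<lambda>z. z = p \<or> z = q) L"
    using assms by (intro filter_cong) (auto simp: inj_on_def)
  finally show ?thesis .
qed

lemma filter_swap:
  "filter (\<lambda>z. z = x \<or> z = y) (map prod.swap L) = map prod.swap (filter (\<lambda>z. z = prod.swap x \<or> z = prod.swap y) L)"
proof -
  have "filter (\<lambda>z. z = x \<or> z = y) (map prod.swap L) = map prod.swap (filter (\<lambda>z. prod.swap z = x \<or> prod.swap z = y) L)"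
    by (simp add: filter_map o_def)
  also have "filter (\<lambda>z. prod.swap z = x \<or> prod.swap z = y) L = filter (\<lambda>z. z = prod.swap x \<or> z = prod.swap y) L"
    by (intro filter_cong) auto
  finally show ?thesis .
qed

lemma orient:
  assumes "uniform k w" "represents w V E" "i < j" "j < length (remdups w)" "E (remdups w ! i) (remdups w ! j)"
  shows "filter (\<lambda>z. z = remdups w ! i \<or> z = remdups w ! j) w = altw (remdups w ! i) (remdups w ! j) (2 * k)"
proof -
  define P where "P = remdups w"
  define u where "u = P ! i"
  define u' where "u' = P ! j"
  have dP: "distinct P" by (simp add: P_def)
  have ne: "u \<noteq> u'" using assms(3,4) dP unfolding u_def u'_def P_def[symmetric] by (simp add: nth_eq_iff_index_eq)
  have uin: "u \<in> set w" "u' \<in> set w" using assms(3,4) nth_mem[of i "remdups w"] nth_mem[of j "remdups w"]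
    unfolding u_def u'_def P_def by auto
  have V: "set w = V" using assms(2) by (simp add: represents_def)
  have alt: "alternate w u u'" using assms(2,5) ne uin V unfolding represents_def u_def u'_def P_def by blast
  define F where "F = filter (\<lambda>z. z = u \<or> z = u') w"
  have nar: "no_adj_repeat F" using alt by (simp add: alternate_def F_def)
  have sF: "set F \<subseteq> {u, u'}" by (auto simp: F_def)
  have ck: "count_list w u = k" "count_list w u' = k" using assms(1) uin by (auto simp: uniform_def)
  have cF: "count_list F u = k" "count_list F u' = k" unfolding F_def
    by (simp_all add: count_filter_in ck)
  have k1: "k \<ge> 1" using ck(1) uin(1) count_list_0_iff[of w u] by linarith
  have "F = altw u u' (2 * k) \<or> F = altw u' u (2 * k)"
    using alt_struct[OF nar sF ne] cF by simp
  moreover have "F \<noteq> altw u' u (2 * k)"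
  proof
    assume h: "F = altw u' u (2 * k)"
    have "remdups F = filter (\<lambda>z. z = u \<or> z = u') P" unfolding F_def P_def by (simp add: remdups_filter)
    also have "\<dots> = [u, u']" unfolding u_def u'_def using filter_nth2[OF dP assms(3)] assms(4) P_def by simp
    finally have "remdups F = [u, u']" .
    moreover obtain k' where "k = Suc k'" using k1 by (cases k) auto
    ultimately have "remdups (altw u' u (2 * Suc k')) = [u, u']" using h by simp
    then show False using remdups_altw[of u' u k'] ne by simp
  qed
  ultimately show ?thesis unfolding F_def u_def u'_def P_def by blast
qed

lemma nonedge:
  assumes "represents w V E" "u \<in> V" "u' \<in> V" "u \<noteq> u'" "\<not> E u u'"
  shows "\<not> no_adj_repeat (filter (\<lambda>z. z = u \<or> z = u') w)"
  using assms unfolding represents_def alternate_def by blast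

lemma key:
  fixes w1 :: "'a list" and w2 :: "'b list"
  assumes sG: "simple_graph VG EG" and sH: "simple_graph VH EH"
    and u1: "uniform k1 w1" and r1: "represents w1 VG EG"
    and u2: "uniform k2 w2" and r2: "represents w2 VH EH"
    and k1: "k1 \<ge> 1" and k2: "k2 \<ge> 1"
    and P1: "P1 = remdups w1" and P2: "P2 = remdups w2"
    and n: "n = length P1" and m: "m = length P2"
    and f: "f = (\<lambda>(i, a). (P1 ! i, P2 ! a))"
    and W: "W = blk w1 P2 @ map f (EI n m) @ map prod.swap (blk w2 P1)"
    and idx: "i < n" "i' < n" "a < m" "a' < m"
    and ord: "(i = i' \<and> a < a') \<or> i < i'"
  shows "cart_E EG EH (f (i, a)) (f (i', a')) \<longleftrightarrow> no_adj_repeat (filter (\<lambda>z. z = f (i, a) \<or> z = f (i', a')) W)"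
proof -
  have dP1: "distinct P1" and dP2: "distinct P2" using P1 P2 by simp_all
  have V1: "set P1 = VG" using r1 P1 by (simp add: represents_def)
  have V2: "set P2 = VH" using r2 P2 by (simp add: represents_def)
  have sw1: "set w1 = VG" using r1 by (simp add: represents_def)
  have sw2: "set w2 = VH" using r2 by (simp add: represents_def)
  define u where "u = P1 ! i"
  define u' where "u' = P1 ! i'"
  define v where "v = P2 ! a"
  define v' where "v' = P2 ! a'"
  have uin: "u \<in> VG" "u' \<in> VG" using idx n V1 unfolding u_def u'_def by auto
  have vin: "v \<in> VH" "v' \<in> VH" using idx m V2 unfolding v_def v'_def by auto
  have fx: "f (i, a) = (u, v)" and fy: "f (i', a') = (u', v')" by (simp_all add: f u_def u'_def v_def v'_def)
  define x where "x = (u, v)"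
  define y where "y = (u', v')"
  have uu: "u = u' \<longleftrightarrow> i = i'" using dP1 idx n unfolding u_def u'_def by (simp add: nth_eq_iff_index_eq)
  have vv: "v = v' \<longleftrightarrow> a = a'" using dP2 idx m unfolding v_def v'_def by (simp add: nth_eq_iff_index_eq)
  have xy: "x \<noteq> y" using ord uu vv unfolding x_def y_def by auto
  have injf: "inj_on f ({..<n} \<times> {..<m})"
    using dP1 dP2 n m unfolding f by (auto simp: inj_on_def nth_eq_iff_index_eq)
  have FE: "filter (\<lambda>z. z = x \<or> z = y) (map f (EI n m)) = map f (filter (\<lambda>z. z = (i, a) \<or> z = (i', a')) (EI n m))"
    unfolding x_def y_def fx[symmetric] fy[symmetric]
    by (rule filter_map_inj, rule inj_on_subset[OF injf]) (use set_EI idx in auto)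
  have FH: "filter (\<lambda>z. z = x \<or> z = y) (map prod.swap (blk w2 P1))
      = map prod.swap (filter (\<lambda>z. z = (v, u) \<or> z = (v', u')) (blk w2 P1))"
    unfolding x_def y_def by (simp add: filter_swap)
  have split: "filter (\<lambda>z. z = x \<or> z = y) W = filter (\<lambda>z. z = x \<or> z = y) (blk w1 P2)
      @ map f (filter (\<lambda>z. z = (i, a) \<or> z = (i', a')) (EI n m))
      @ map prod.swap (filter (\<lambda>z. z = (v, u) \<or> z = (v', u')) (blk w2 P1))"
    unfolding W using FE FH by simp
  have cw1: "count_list w1 z = k1" if "z \<in> VG" for z using u1 that sw1 by (auto simp: uniform_def)
  have cw2: "count_list w2 z = k2" if "z \<in> VH" for z using u2 that sw2 by (auto simp: uniform_def)
  have n1: "n \<ge> 1" using idx by simp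
  have EGsym: "EG p q = EG q p" for p q using sG unfolding simple_graph_def by blast
  have EHsym: "EH p q = EH q p" for p q using sH unfolding simple_graph_def by blast
  have EGirr: "\<not> EG p p" for p using sG unfolding simple_graph_def by blast
  have EHirr: "\<not> EH p p" for p using sH unfolding simple_graph_def by blast
  have goal: "cart_E EG EH x y \<longleftrightarrow> no_adj_repeat (filter (\<lambda>z. z = x \<or> z = y) W)"
  proof (cases "i = i'")
    case True
    then have aa: "a < a'" using ord by simp
    have uu': "u' = u" using True uu by simp
    have vne: "v \<noteq> v'" using aa vv by simp
    have FG: "filter (\<lambda>z. z = x \<or> z = y) (blk w1 P2) = altw x y (2 * k1)"
    proof -
      have "filter (\<lambda>z. z = x \<or> z = y) (blk w1 P2)
         = concat (replicate (count_list w1 u) (map (Pair u) (filter (\<lambda>b. b = v \<or> b = v') P2)))"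
        unfolding x_def y_def uu' by (rule blk_B1[OF vne])
      also have "filter (\<lambda>b. b = v \<or> b = v') P2 = [v, v']"
        unfolding v_def v'_def using filter_nth2[OF dP2 aa] idx m by simp
      finally show ?thesis using cw1[OF uin(1)] by (simp add: x_def y_def uu' concat_rep_pair)
    qed
    have FEv: "map f (filter (\<lambda>z. z = (i, a) \<or> z = (i', a')) (EI n m)) = altw x y (2 * n)"
      using EI_row[OF idx(1) aa idx(4)] True fx fy by (simp add: map_altw x_def y_def)
    have FHv: "map prod.swap (filter (\<lambda>z. z = (v, u) \<or> z = (v', u')) (blk w2 P1))
        = map (prod.swap \<circ> (\<lambda>z. if z = v then (v, u) else (v', u))) (filter (\<lambda>z. z = v \<or> z = v') w2)"
      using blk_B2[OF dP1, of u u v v' w2] uin V1 vne uu' by simp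
    have ce: "cart_E EG EH x y \<longleftrightarrow> EH v v'" using uu' EGirr unfolding x_def y_def cart_E_def by auto
    show ?thesis
    proof (cases "EH v v'")
      case True
      have "filter (\<lambda>z. z = v \<or> z = v') w2 = altw v v' (2 * k2)"
        using orient[OF u2 r2 aa] idx m P2 True unfolding v_def v'_def by simp
      then have "map prod.swap (filter (\<lambda>z. z = (v, u) \<or> z = (v', u')) (blk w2 P1)) = altw x y (2 * k2)"
        using FHv vne by (simp add: map_altw x_def y_def uu')
      then have "filter (\<lambda>z. z = x \<or> z = y) W = altw x y (2 * k1) @ altw x y (2 * n) @ altw x y (2 * k2)"
        using split FG FEv by simp
      also have "\<dots> = altw x y (2 * k1 + 2 * n + 2 * k2)"
        by (rule altw3)
      finally show ?thesis using ce True nar_altw[OF xy] by simp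
    next
      case False
      have "\<not> no_adj_repeat (filter (\<lambda>z. z = v \<or> z = v') w2)"
        using nonedge[OF r2 vin vne False] .
      moreover have "inj_on (prod.swap \<circ> (\<lambda>z. if z = v then (v, u) else (v', u))) (set (filter (\<lambda>z. z = v \<or> z = v') w2))"
        using vne by (auto simp: inj_on_def)
      ultimately have "\<not> no_adj_repeat (map prod.swap (filter (\<lambda>z. z = (v, u) \<or> z = (v', u')) (blk w2 P1)))"
        unfolding FHv using nar_map by blast
      then show ?thesis using ce False split by (simp add: nar_append)
    qed
  next
    case False
    then have ii: "i < i'" using ord by simp
    have une: "u \<noteq> u'" using False uu by simp
    have FGv: "filter (\<lambda>z. z = x \<or> z = y) (blk w1 P2)
        = map (\<lambda>z. if z = u then x else y) (filter (\<lambda>z. z = u \<or> z = u') w1)"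
      unfolding x_def y_def using blk_B2[OF dP2, of v v' u u' w1] vin V2 une by simp
    have injG: "inj_on (\<lambda>z. if z = u then x else y) (set (filter (\<lambda>z. z = u \<or> z = u') w1))"
      using xy by (auto simp: inj_on_def)
    have FGe: "EG u u' \<Longrightarrow> filter (\<lambda>z. z = x \<or> z = y) (blk w1 P2) = altw x y (2 * k1)"
    proof -
      assume e: "EG u u'"
      have "filter (\<lambda>z. z = u \<or> z = u') w1 = altw u u' (2 * k1)"
        using orient[OF u1 r1 ii] idx n P1 e unfolding u_def u'_def by simp
      then show ?thesis using FGv une by (simp add: map_altw)
    qed
    have FGn: "\<not> EG u u' \<Longrightarrow> \<not> no_adj_repeat (filter (\<lambda>z. z = x \<or> z = y) (blk w1 P2))"
      unfolding FGv using nonedge[OF r1 uin une] nar_map[OF injG] by blast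
    show ?thesis
    proof (cases "a = a'")
      case True
      have vv': "v' = v" using True vv by simp
      have FEv: "map f (filter (\<lambda>z. z = (i, a) \<or> z = (i', a')) (EI n m)) = altw x y (2 * n)"
        using EI_col[OF ii idx(2) idx(3)] True fx fy by (simp add: map_altw x_def y_def)
      have FHv: "map prod.swap (filter (\<lambda>z. z = (v, u) \<or> z = (v', u')) (blk w2 P1)) = altw x y (2 * k2)"
      proof -
        have "filter (\<lambda>z. z = (v, u) \<or> z = (v', u')) (blk w2 P1)
           = concat (replicate (count_list w2 v) (map (Pair v) (filter (\<lambda>b. b = u \<or> b = u') P1)))"
          unfolding vv' by (rule blk_B1[OF une])
        also have "filter (\<lambda>b. b = u \<or> b = u') P1 = [u, u']"
          unfolding u_def u'_def using filter_nth2[OF dP1 ii] idx n by simp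
        finally show ?thesis using cw2[OF vin(1)]
          by (simp add: x_def y_def vv' concat_rep_pair map_altw)
      qed
      have ce: "cart_E EG EH x y \<longleftrightarrow> EG u u'" using vv' une unfolding x_def y_def cart_E_def by auto
      show ?thesis
      proof (cases "EG u u'")
        case True
        then have "filter (\<lambda>z. z = x \<or> z = y) W = altw x y (2 * k1) @ altw x y (2 * n) @ altw x y (2 * k2)"
          using split FGe FEv FHv by simp
        also have "\<dots> = altw x y (2 * k1 + 2 * n + 2 * k2)"
          by (rule altw3)
        finally show ?thesis using ce True nar_altw[OF xy] by simp
      next
        case False
        then show ?thesis using ce FGn split by (simp add: nar_append)
      qed
    next
      case False
      have vne: "v \<noteq> v'" using False vv by simp
      have ce: "\<not> cart_E EG EH x y" using une vne unfolding x_def y_def cart_E_def by auto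
      have FHv: "map prod.swap (filter (\<lambda>z. z = (v, u) \<or> z = (v', u')) (blk w2 P1))
          = map (prod.swap \<circ> (\<lambda>z. if z = v then (v, u) else (v', u'))) (filter (\<lambda>z. z = v \<or> z = v') w2)"
        using blk_B2[OF dP1, of u u' v v' w2] uin V1 vne by simp
      have injH: "inj_on (prod.swap \<circ> (\<lambda>z. if z = v then (v, u) else (v', u'))) (set (filter (\<lambda>z. z = v \<or> z = v') w2))"
        using vne by (auto simp: inj_on_def)
      show ?thesis
      proof (cases "EG u u' \<and> EH v v'")
        case False
        then consider "\<not> EG u u'" | "\<not> EH v v'" by blast
        then show ?thesis
        proof cases
          case 1
          then show ?thesis using ce FGn split by (simp add: nar_append)
        next
          case 2
          then have "\<not> no_adj_repeat (map prod.swap (filter (\<lambda>z. z = (v, u) \<or> z = (v', u')) (blk w2 P1)))"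
            unfolding FHv using nonedge[OF r2 vin vne] nar_map[OF injH] by blast
          then show ?thesis using ce split by (simp add: nar_append)
        qed
      next
        case True
        have G1: "filter (\<lambda>z. z = x \<or> z = y) (blk w1 P2) = altw x y (2 * k1)" using FGe True by simp
        show ?thesis
        proof (cases "a < a'")
          case True
          have "\<not> no_adj_repeat (filter (\<lambda>z. z = (i, a) \<or> z = (i', a')) (EI n m))"
            using EI_break[OF ii idx(2) True idx(4)] .
          moreover have "inj_on f (set (filter (\<lambda>z. z = (i, a) \<or> z = (i', a')) (EI n m)))"
            by (rule inj_on_subset[OF injf]) (use set_EI in auto)
          ultimately have "\<not> no_adj_repeat (map f (filter (\<lambda>z. z = (i, a) \<or> z = (i', a')) (EI n m)))"
            using nar_map by blast
          then show ?thesis using ce split by (simp add: nar_append)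
        next
          case False
          then have aa: "a' < a" using \<open>a \<noteq> a'\<close> by simp
          have "filter (\<lambda>z. z = v' \<or> z = v) w2 = altw v' v (2 * k2)"
            using orient[OF u2 r2 aa] idx m P2 True EHsym unfolding v_def v'_def by simp
          moreover have "filter (\<lambda>z. z = v \<or> z = v') w2 = filter (\<lambda>z. z = v' \<or> z = v) w2"
            by (intro filter_cong) auto
          ultimately have H1: "map prod.swap (filter (\<lambda>z. z = (v, u) \<or> z = (v', u')) (blk w2 P1)) = altw y x (2 * k2)"
            using FHv vne by (simp add: map_altw x_def y_def)
          define FE' where "FE' = map f (filter (\<lambda>z. z = (i, a) \<or> z = (i', a')) (EI n m))"
          have FE'eq: "FE' = filter (\<lambda>z. z = x \<or> z = y) (map f (EI n m))" using FE FE'_def by simp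
          show ?thesis
          proof (cases "no_adj_repeat FE'")
            case False
            then show ?thesis using ce split FE'_def by (simp add: nar_append)
          next
            case True
            have sFE: "set FE' \<subseteq> {x, y}" using FE'eq by auto
            have cnt: "count_list (map f (EI n m)) (f p) = n" if "p \<in> {..<n} \<times> {..<m}" for p
            proof -
              obtain pi pa where p: "p = (pi, pa)" by (cases p)
              have "count_list (map f (EI n m)) (f p) = count_list (EI n m) p"
                by (rule count_map_inj, rule inj_on_subset[OF injf]) (use set_EI that in auto)
              also have "\<dots> = n" using EI_count that p by auto
              finally show ?thesis .
            qed
            have cx: "count_list FE' x = n" unfolding FE'eq
              using cnt[of "(i, a)"] idx fx by (simp add: count_filter_in x_def)
            have cy: "count_list FE' y = n" unfolding FE'eq
              using cnt[of "(i', a')"] idx fy by (simp add: count_filter_in y_def)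
            have "FE' = altw x y (2 * n) \<or> FE' = altw y x (2 * n)"
              using alt_struct[OF True sFE xy] cx cy by simp
            then show ?thesis
            proof
              assume h: "FE' = altw x y (2 * n)"
              have "filter (\<lambda>z. z = x \<or> z = y) W = altw x y (2 * k1) @ altw x y (2 * n) @ altw y x (2 * k2)"
                using split G1 H1 h FE'_def by simp
              then show ?thesis using junction1[OF k1 k2 n1] ce by simp
            next
              assume h: "FE' = altw y x (2 * n)"
              have "filter (\<lambda>z. z = x \<or> z = y) W = altw x y (2 * k1) @ altw y x (2 * n) @ altw y x (2 * k2)"
                using split G1 H1 h FE'_def by simp
              then show ?thesis using junction2[OF k1 k2 n1] ce by simp
            qed
          qed
        qed
      qed
    qed
  qed
  then show ?thesis unfolding x_def y_def fx fy .
qed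

lemma cart_E_sym:
  assumes "\<And>p q. EG p q = EG q p" "\<And>p q. EH p q = EH q p"
  shows "cart_E EG EH x y = cart_E EG EH y x"
  using assms by (cases x; cases y) (auto simp: cart_E_def)

lemma construct:
  fixes w1 :: "'a list" and w2 :: "'b list"
  assumes sG: "simple_graph VG EG" and sH: "simple_graph VH EH"
    and u1: "uniform k1 w1" and r1: "represents w1 VG EG"
    and u2: "uniform k2 w2" and r2: "represents w2 VH EH"
    and ne1: "VG \<noteq> {}" and ne2: "VH \<noteq> {}"
  shows "k_representable (k1 + k2 + card VG) (cart_V VG VH) (cart_E EG EH)"
proof -
  define P1 where "P1 = remdups w1"
  define P2 where "P2 = remdups w2"
  define n where "n = length P1"
  define m where "m = length P2"
  define f where "f = (\<lambda>(i::nat, a::nat). (P1 ! i, P2 ! a))"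
  define W where "W = blk w1 P2 @ map f (EI n m) @ map prod.swap (blk w2 P1)"
  have dP1: "distinct P1" and dP2: "distinct P2" by (simp_all add: P1_def P2_def)
  have sw1: "set w1 = VG" using r1 by (simp add: represents_def)
  have sw2: "set w2 = VH" using r2 by (simp add: represents_def)
  have V1: "set P1 = VG" using sw1 by (simp add: P1_def)
  have V2: "set P2 = VH" using sw2 by (simp add: P2_def)
  have cw1: "count_list w1 z = k1" if "z \<in> VG" for z using u1 that sw1 by (auto simp: uniform_def)
  have cw2: "count_list w2 z = k2" if "z \<in> VH" for z using u2 that sw2 by (auto simp: uniform_def)
  have k1: "k1 \<ge> 1"
  proof -
    obtain z where z: "z \<in> VG" using ne1 by blast
    then have "count_list w1 z \<noteq> 0" using sw1 count_list_0_iff[of w1 z] by simp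
    then show ?thesis using cw1[OF z] by simp
  qed
  have k2: "k2 \<ge> 1"
  proof -
    obtain z where z: "z \<in> VH" using ne2 by blast
    then have "count_list w2 z \<noteq> 0" using sw2 count_list_0_iff[of w2 z] by simp
    then show ?thesis using cw2[OF z] by simp
  qed
  have ncard: "n = card VG" unfolding n_def P1_def using sw1 by (simp add: length_remdups_card_conv)
  have injf: "inj_on f ({..<n} \<times> {..<m})"
    using dP1 dP2 unfolding f_def n_def m_def by (auto simp: inj_on_def nth_eq_iff_index_eq)
  have getidx: "\<exists>i a. i < n \<and> a < m \<and> f (i, a) = z" if "z \<in> VG \<times> VH" for z
  proof -
    obtain u v where z: "z = (u, v)" by (cases z)
    have "u \<in> set P1" "v \<in> set P2" using that z V1 V2 by auto
    obtain i where i: "i < n" "P1 ! i = u" using \<open>u \<in> set P1\<close> unfolding n_def in_set_conv_nth by blast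
    obtain a where a: "a < m" "P2 ! a = v" using \<open>v \<in> set P2\<close> unfolding m_def in_set_conv_nth by blast
    have "f (i, a) = z" using i a z by (simp add: f_def)
    then show ?thesis using i a by blast
  qed
  have sb1: "set (blk w1 P2) = VG \<times> VH" using set_blk[of w1 P2] sw1 V2 by simp
  have sb2: "set (map prod.swap (blk w2 P1)) = VG \<times> VH"
  proof -
    have "set (blk w2 P1) = VH \<times> VG" using set_blk[of w2 P1] sw2 V1 by simp
    then show ?thesis by (simp add: product_swap)
  qed
  have sE: "set (map f (EI n m)) \<subseteq> VG \<times> VH"
  proof
    fix z assume "z \<in> set (map f (EI n m))"
    then obtain p where p: "p \<in> set (EI n m)" "z = f p" by (auto simp only: set_map)
    obtain i a where pia: "p = (i, a)" by (cases p)
    have "i < n" "a < m" using p(1) set_EI[of n m] pia by auto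
    moreover have "z = (P1 ! i, P2 ! a)" using p(2) pia by (simp add: f_def)
    ultimately show "z \<in> VG \<times> VH" using V1 V2 n_def m_def by auto
  qed
  have setW: "set W = VG \<times> VH"
    unfolding W_def set_append sb1 sb2 using sE by blast
  have uniW: "uniform (k1 + k2 + card VG) W"
    unfolding uniform_def
  proof
    fix z assume "z \<in> set W"
    then have zV: "z \<in> VG \<times> VH" using setW by simp
    obtain u v where z: "z = (u, v)" by (cases z)
    have uV: "u \<in> VG" and vV: "v \<in> VH" using zV z by auto
    obtain i a where ia: "i < n" "a < m" "f (i, a) = z" using getidx[OF zV] by blast
    have c1: "count_list (blk w1 P2) z = k1"
      unfolding z using blk_count[OF dP2, of v w1 u] vV V2 cw1[OF uV] by simp
    have c2: "count_list (map f (EI n m)) z = n"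
    proof -
      have "count_list (map f (EI n m)) (f (i, a)) = count_list (EI n m) (i, a)"
        by (rule count_map_inj, rule inj_on_subset[OF injf]) (use set_EI ia in auto)
      then show ?thesis using EI_count[OF ia(1,2)] ia(3) by simp
    qed
    have c3: "count_list (map prod.swap (blk w2 P1)) z = k2"
    proof -
      have "count_list (map prod.swap (blk w2 P1)) (prod.swap (v, u)) = count_list (blk w2 P1) (v, u)"
        by (rule count_list_map_conv) simp
      also have "\<dots> = k2" using blk_count[OF dP1, of u w2 v] uV V1 cw2[OF vV] by simp
      finally show ?thesis using z by simp
    qed
    show "count_list W z = k1 + k2 + card VG" unfolding W_def using c1 c2 c3 ncard by simp
  qed
  have EGsym: "\<And>p q. EG p q = EG q p" using sG unfolding simple_graph_def by blast
  have EHsym: "\<And>p q. EH p q = EH q p" using sH unfolding simple_graph_def by blast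
  have keyW: "cart_E EG EH (f (i, a)) (f (i', a')) \<longleftrightarrow> no_adj_repeat (filter (\<lambda>z. z = f (i, a) \<or> z = f (i', a')) W)"
    if "i < n" "i' < n" "a < m" "a' < m" "(i = i' \<and> a < a') \<or> i < i'" for i i' a a'
    by (rule key[OF sG sH u1 r1 u2 r2 k1 k2 P1_def P2_def n_def m_def f_def W_def that])
  have rep: "represents W (cart_V VG VH) (cart_E EG EH)"
    unfolding represents_def cart_V_def
  proof (intro conjI ballI impI)
    show "set W = VG \<times> VH" by (rule setW)
    fix x y assume xV: "x \<in> VG \<times> VH" and yV: "y \<in> VG \<times> VH" and xy: "x \<noteq> y"
    obtain i a where ia: "i < n" "a < m" "f (i, a) = x" using getidx[OF xV] by blast
    obtain i' a' where ia': "i' < n" "a' < m" "f (i', a') = y" using getidx[OF yV] by blast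
    have "(i, a) \<noteq> (i', a')" using ia ia' xy by auto
    then consider "(i = i' \<and> a < a') \<or> i < i'" | "(i' = i \<and> a' < a) \<or> i' < i"
      by (metis linorder_neqE_nat prod.inject)
    then show "cart_E EG EH x y = alternate W x y"
    proof cases
      case 1
      then show ?thesis using keyW[OF ia(1) ia'(1) ia(2) ia'(2) 1] ia ia' by (simp add: alternate_def)
    next
      case 2
      have "cart_E EG EH y x = no_adj_repeat (filter (\<lambda>z. z = y \<or> z = x) W)"
        using keyW[OF ia'(1) ia(1) ia'(2) ia(2) 2] ia ia' by simp
      moreover have "filter (\<lambda>z. z = y \<or> z = x) W = filter (\<lambda>z. z = x \<or> z = y) W"
        by (intro filter_cong) auto
      ultimately show ?thesis using cart_E_sym[of EG EH x y, OF EGsym EHsym] by (simp add: alternate_def)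
    qed
  qed
  show ?thesis unfolding k_representable_def using uniW rep by blast
qed

lemma last_altw_gen: "last (altw x y (Suc L)) = (if even L then x else y)"
proof (induction L arbitrary: x y)
  case 0 then show ?case by simp
next
  case (Suc L)
  have "altw x y (Suc (Suc L)) = x # altw y x (Suc L)" by simp
  then show ?case using Suc[of y x] by simp
qed

lemma remdups_altw_gen: "x \<noteq> y \<Longrightarrow> remdups (altw x y (Suc (Suc L))) = (if even L then [x, y] else [y, x])"
proof (induction L arbitrary: x y)
  case 0 then show ?case by simp
next
  case (Suc L)
  have e: "altw x y (Suc (Suc (Suc L))) = x # altw y x (Suc (Suc L))" by simp
  have ih: "remdups (altw y x (Suc (Suc L))) = (if even L then [y, x] else [x, y])"
    using Suc.IH[of y x] Suc.prems by simp
  have "x \<in> set (altw y x (Suc (Suc L)))" by simp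
  then show ?case using e ih by simp
qed

lemma count_distinct: "distinct xs \<Longrightarrow> count_list xs x = (if x \<in> set xs then 1 else 0)"
  by (induction xs) auto

lemma last_not:
  assumes "no_adj_repeat F" "set F \<subseteq> {x, y}" "x \<noteq> y" "count_list F x < count_list F y"
  shows "F \<noteq> [] \<and> last F \<noteq> x"
proof -
  define L where "L = length F"
  have c: "F = altw x y L \<or> F = altw y x L" using alt_any[OF assms(1,2)] unfolding L_def by blast
  have "F \<noteq> altw x y L"
  proof
    assume h: "F = altw x y L"
    have "count_list F x = (L + 1) div 2" "count_list F y = L div 2"
      using count_altw[OF assms(3), of L] unfolding h by simp_all
    then show False using assms(4) by simp
  qed
  then have h: "F = altw y x L" using c by blast
  have ne: "y \<noteq> x" using assms(3) by simp
  have "count_list F y = (L + 1) div 2" "count_list F x = L div 2"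
    using count_altw[OF ne, of L] unfolding h by simp_all
  then have "odd L" using assms(4) by presburger
  then obtain L' where L': "L = Suc L'" "even L'" by (cases L) auto
  have "last F = y" unfolding h L' last_altw_gen using L' by simp
  moreover have "F \<noteq> []" unfolding h L' by simp
  ultimately show ?thesis using assms(3) by simp
qed

lemma pad_alt:
  assumes "x \<noteq> y" "x \<in> set w" "y \<in> set w" "\<forall>z\<in>set w. count_list w z \<le> K"
  shows "alternate (w @ filter (\<lambda>z. count_list w z < K) (remdups w)) x y \<longleftrightarrow> alternate w x y"
proof -
  define Q where "Q = (\<lambda>z. z = x \<or> z = y)"
  define C where "C = (\<lambda>z. count_list w z < K)"
  define F where "F = filter Q w"
  define Fp where "Fp = filter (\<lambda>z. Q z \<and> C z) (remdups w)"
  have eq: "alternate (w @ filter C (remdups w)) x y \<longleftrightarrow> no_adj_repeat (F @ Fp)"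
    unfolding alternate_def F_def Fp_def Q_def by (simp add: filter_filter conj_commute)
  have sF: "set F \<subseteq> {x, y}" by (auto simp: F_def Q_def)
  have cF: "count_list F x = count_list w x" "count_list F y = count_list w y"
    by (simp_all add: F_def Q_def count_filter_in)
  have inF: "x \<in> set F" "y \<in> set F" using assms(2,3) by (auto simp: F_def Q_def)
  have "no_adj_repeat (F @ Fp) \<longleftrightarrow> no_adj_repeat F"
  proof
    assume "no_adj_repeat (F @ Fp)" then show "no_adj_repeat F" by (simp add: nar_append)
  next
    assume nF: "no_adj_repeat F"
    show "no_adj_repeat (F @ Fp)"
    proof (cases "C x")
      case Cx: True
      show ?thesis
      proof (cases "C y")
        case Cy: True
        have "Fp = filter Q (remdups w)" unfolding Fp_def using Cx Cy by (intro filter_cong) (auto simp: Q_def)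
        then have Fp: "Fp = remdups F" by (simp add: F_def remdups_filter)
        have "length F \<ge> 2"
        proof -
          have "{x, y} \<subseteq> set F" using inF by auto
          then have "card {x, y} \<le> card (set F)" by (simp add: card_mono)
          also have "\<dots> \<le> length F" by (rule card_length)
          finally show ?thesis using assms(1) by simp
        qed
        then obtain L where L: "length F = Suc (Suc L)" by (metis add_2_eq_Suc le_add_diff_inverse2 add.commute)
        have "F = altw x y (length F) \<or> F = altw y x (length F)" using alt_any[OF nF sF] .
        then obtain s t where st: "s \<noteq> t" "F = altw s t (Suc (Suc L))" using L assms(1) by metis
        have lastF: "last F = (if even L then t else s)"
          unfolding st(2) using last_altw_gen[of s t "Suc L"] by simp
        have rF: "remdups F = (if even L then [s, t] else [t, s])"
          unfolding st(2) using remdups_altw_gen[OF st(1)] by simp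
        show ?thesis unfolding Fp nar_append using nF rF lastF st(1) by auto
      next
        case Cy: False
        have "Fp = filter (\<lambda>z. z = x) (remdups w)" unfolding Fp_def using Cx Cy by (intro filter_cong) (auto simp: Q_def)
        also have "\<dots> = [x]" using filter_single_distinct[of "remdups w" x] assms(2) by simp
        finally have Fp: "Fp = [x]" .
        have "count_list F x < count_list F y" using cF Cx Cy assms(3,4) by (auto simp: C_def)
        then have "F \<noteq> [] \<and> last F \<noteq> x" using last_not[OF nF sF assms(1)] by blast
        then show ?thesis unfolding Fp nar_append using nF by auto
      qed
    next
      case Cx: False
      show ?thesis
      proof (cases "C y")
        case Cy: True
        have "Fp = filter (\<lambda>z. z = y) (remdups w)" unfolding Fp_def using Cx Cy by (intro filter_cong) (auto simp: Q_def)
        also have "\<dots> = [y]" using filter_single_distinct[of "remdups w" y] assms(3) by simp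
        finally have Fp: "Fp = [y]" .
        have "count_list F y < count_list F x" using cF Cx Cy assms(2,4) by (auto simp: C_def)
        moreover have "set F \<subseteq> {y, x}" using sF by auto
        ultimately have "F \<noteq> [] \<and> last F \<noteq> y" using last_not[OF nF _ ] assms(1) by blast
        then show ?thesis unfolding Fp nar_append using nF by auto
      next
        case Cy: False
        have "Fp = []" unfolding Fp_def using Cx Cy by (auto simp: Q_def filter_empty_conv)
        then show ?thesis using nF by simp
      qed
    qed
  qed
  then show ?thesis using eq unfolding C_def alternate_def F_def Q_def by simp
qed

lemma pad:
  assumes "represents w V E" "\<forall>z\<in>set w. count_list w z \<le> K"
  defines "w' \<equiv> w @ filter (\<lambda>z. count_list w z < K) (remdups w)"
  shows "represents w' V E \<and> (\<forall>z\<in>set w. count_list w' z = count_list w z + (if count_list w z < K then 1 else 0))"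
proof
  have sw': "set w' = set w" unfolding w'_def by auto
  show "represents w' V E"
    unfolding represents_def
  proof (intro conjI ballI impI)
    show "set w' = V" using sw' assms(1) by (simp add: represents_def)
    fix x y assume "x \<in> V" "y \<in> V" "x \<noteq> y"
    moreover have "set w = V" using assms(1) by (simp add: represents_def)
    ultimately show "E x y = alternate w' x y"
      using pad_alt[of x y w K] assms(1,2) unfolding w'_def represents_def by auto
  qed
  show "\<forall>z\<in>set w. count_list w' z = count_list w z + (if count_list w z < K then 1 else 0)"
  proof
    fix z assume z: "z \<in> set w"
    have "count_list (filter (\<lambda>z. count_list w z < K) (remdups w)) z = (if count_list w z < K then 1 else 0)"
    proof (cases "count_list w z < K")
      case True
      then show ?thesis using count_filter_in[of "\<lambda>z. count_list w z < K" z "remdups w"]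
        count_distinct[of "remdups w" z] z by simp
    next
      case False
      then have "z \<notin> set (filter (\<lambda>z. count_list w z < K) (remdups w))" by simp
      then show ?thesis using False count_list_0_iff by metis
    qed
    then show "count_list w' z = count_list w z + (if count_list w z < K then 1 else 0)"
      unfolding w'_def by simp
  qed
qed

lemma unif:
  "represents w V E \<Longrightarrow> (\<forall>z\<in>set w. count_list w z \<le> K \<and> K \<le> count_list w z + N)
    \<Longrightarrow> \<exists>w'. uniform K w' \<and> represents w' V E"
proof (induction N arbitrary: w)
  case 0
  then have "uniform K w" unfolding uniform_def by auto
  then show ?case using 0 by blast
next
  case (Suc N)
  define w' where "w' = w @ filter (\<lambda>z. count_list w z < K) (remdups w)"
  have p: "represents w' V E \<and> (\<forall>z\<in>set w. count_list w' z = count_list w z + (if count_list w z < K then 1 else 0))"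
    using pad[of w V E K] Suc.prems unfolding w'_def by blast
  have sw': "set w' = set w" unfolding w'_def by auto
  have "\<forall>z\<in>set w'. count_list w' z \<le> K \<and> K \<le> count_list w' z + N"
  proof
    fix z assume "z \<in> set w'"
    then have z: "z \<in> set w" using sw' by simp
    then show "count_list w' z \<le> K \<and> K \<le> count_list w' z + N"
      using p Suc.prems(2) by (cases "count_list w z < K") auto
  qed
  then show ?case using Suc.IH p by blast
qed

lemma wr_krep: "word_representable V E \<Longrightarrow> \<exists>k. k_representable k V E"
proof -
  assume "word_representable V E"
  then obtain w where w: "represents w V E" unfolding word_representable_def by blast
  have "\<forall>z\<in>set w. count_list w z \<le> length w \<and> length w \<le> count_list w z + length w"
    by (simp add: count_le_length)
  then obtain w' where "uniform (length w) w'" "represents w' V E" using unif[OF w] by blast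
  then show ?thesis unfolding k_representable_def by blast
qed

lemma rn_krep: "word_representable V E \<Longrightarrow> k_representable (representation_number V E) V E"
  unfolding representation_number_def using wr_krep by (metis LeastI_ex)

lemma krep_swap:
  assumes "k_representable k (cart_V VH VG) (cart_E EH EG)"
  shows "k_representable k (cart_V VG VH) (cart_E EG EH)"
proof -
  obtain w where u: "uniform k w" and r: "represents w (cart_V VH VG) (cart_E EH EG)"
    using assms unfolding k_representable_def by blast
  define w' where "w' = map prod.swap w"
  have "uniform k w'"
    unfolding uniform_def w'_def
  proof
    fix z assume "z \<in> set (map prod.swap w)"
    then obtain z' where z': "z' \<in> set w" "z = prod.swap z'" by auto
    have "count_list (map prod.swap w) (prod.swap z') = count_list w z'"
      by (rule count_list_map_conv) simp
    then show "count_list (map prod.swap w) z = k" using u z' by (simp add: uniform_def)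
  qed
  moreover have "represents w' (cart_V VG VH) (cart_E EG EH)"
    unfolding represents_def
  proof (intro conjI ballI impI)
    show "set w' = cart_V VG VH" using r unfolding w'_def represents_def cart_V_def
      by (simp add: product_swap)
    fix x y assume x: "x \<in> cart_V VG VH" and y: "y \<in> cart_V VG VH" and xy: "x \<noteq> y"
    have x': "prod.swap x \<in> cart_V VH VG" and y': "prod.swap y \<in> cart_V VH VG"
      using x y by (auto simp: cart_V_def)
    have xy': "prod.swap x \<noteq> prod.swap y" using xy by (metis swap_swap)
    have e1: "cart_E EG EH x y = cart_E EH EG (prod.swap x) (prod.swap y)"
      by (cases x; cases y) (auto simp: cart_E_def)
    have "alternate w' x y = no_adj_repeat (map prod.swap (filter (\<lambda>z. z = prod.swap x \<or> z = prod.swap y) w))"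
      unfolding alternate_def w'_def by (simp only: filter_swap)
    also have "\<dots> = alternate w (prod.swap x) (prod.swap y)"
      unfolding alternate_def by (rule nar_map) simp
    finally show "cart_E EG EH x y = alternate w' x y"
      using e1 r x' y' xy' unfolding represents_def by auto
  qed
  ultimately show ?thesis unfolding k_representable_def by blast
qed

theorem mainTheorem8:
  fixes VG :: "'a set" and EG :: "'a \<Rightarrow> 'a \<Rightarrow> bool"
    and VH :: "'b set" and EH :: "'b \<Rightarrow> 'b \<Rightarrow> bool"
  assumes "simple_graph VG EG" and "simple_graph VH EH"
    and "word_representable VG EG" and "word_representable VH EH"
  shows "k_representable
           (representation_number VG EG + representation_number VH EH + min (card VG) (card VH))
           (cart_V VG VH) (cart_E EG EH)"
proof (cases "VG = {} \<or> VH = {}")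
  case True
  then have "cart_V VG VH = {}" by (auto simp: cart_V_def)
  then show ?thesis unfolding k_representable_def represents_def uniform_def by (intro exI[of _ "[]"]) simp
next
  case False
  define k1 where "k1 = representation_number VG EG"
  define k2 where "k2 = representation_number VH EH"
  obtain w1 where u1: "uniform k1 w1" and r1: "represents w1 VG EG"
    using rn_krep[OF assms(3)] unfolding k1_def k_representable_def by blast
  obtain w2 where u2: "uniform k2 w2" and r2: "represents w2 VH EH"
    using rn_krep[OF assms(4)] unfolding k2_def k_representable_def by blast
  show ?thesis
  proof (cases "card VG \<le> card VH")
    case True
    then show ?thesis using construct[OF assms(1,2) u1 r1 u2 r2] False
      unfolding k1_def k2_def by (simp add: min_def)
  next
    case nle: False
    have "k_representable (k2 + k1 + card VH) (cart_V VH VG) (cart_E EH EG)"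
      using construct[OF assms(2,1) u2 r2 u1 r1] False by simp
    then have "k_representable (k2 + k1 + card VH) (cart_V VG VH) (cart_E EG EH)" by (rule krep_swap)
    then show ?thesis using nle unfolding k1_def k2_def by (simp add: min_def add.commute)
  qed
qed

end
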